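(* Let $n\ge3$ and $\mathbf{q}\in(\Bbbk^\times)^n$; indices are modulo $n$. (1) Let $\alpha_0,\dots,\alpha_{n-1}\in\Bbbk^\times$ and set $p_i=\frac{\alpha_{i-1}}{\alpha_i}q_i$ for $0\le i<n$. The linear map $\phi_\alpha:A_n(\mathbf{q})\to A_n(\mathbf{p})$ with $\phi_\alpha(e_i)=e_i$, $\phi_\alpha(a_i)=\alpha_ia_i$, $\phi_\alpha(a_i^* )=a_i^*$ extends to an isomorphism. (2) Set $p_i=q_{i-1}$ for $0\le i<n$. The linear map $\psi:A_n(\mathbf{q})\to A_n(\mathbf{p})$ with $\psi(e_i)=e_{i+1}$, $\psi(a_i)=a_{i+1}$, $\psi(a_i^* )=a_{i+1}^*$ extends to an isomorphism. (3) Set $p_i=q_{n-i}^{-1}$ for $0\le i<n$. The linear map $\pi:A_n(\mathbf{q})\to A_n(\mathbf{p})$ with $\pi(e_i)=e_{n-i}$, $\pi(a_i)=a_{n-i-1}^*$, $\pi(a_i^* )=a_{n-i-1}$ extends to an isomorphism.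
   Context: $\Bbbk$ is an algebraically closed field of characteristic zero. Paths are written left to right. $A_n(\mathbf{q})=\Bbbk Q/(a_ia_i^*-q_ia_{i-1}^*a_{i-1},\ i=0,\dots,n-1)$, where $Q$ has vertices $e_0,\dots,e_{n-1}$ and arrows $a_i:e_i\to e_{i+1}$, $a_i^*:e_{i+1}\to e_i$, indices modulo $n$. *)

theory Defs
  imports "HOL-Algebra.QuotRing"
begin

definition alg_closed :: "'k::field itself \<Rightarrow> bool" where
  "alg_closed TYPE('k) \<longleftrightarrow>
     (\<forall>(c::nat \<Rightarrow> 'k) d. 0 < d \<and> c d \<noteq> 0 \<longrightarrow> (\<exists>x. (\<Sum>i\<le>d. c i * x ^ i) = 0))"

text \<open>Arrows of the cyclic double quiver Q with n vertices:
  Arr i = a_i : e_i -> e_(i+1),  Star i = a_i^* : e_(i+1) -> e_i  (indices mod n).\<close>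
datatype arr = Arr nat | Star nat

fun aidx :: "arr \<Rightarrow> nat" where
  "aidx (Arr i) = i" | "aidx (Star i) = i"

fun asrc :: "nat \<Rightarrow> arr \<Rightarrow> nat" where
  "asrc n (Arr i) = i" | "asrc n (Star i) = Suc i mod n"

fun atgt :: "nat \<Rightarrow> arr \<Rightarrow> nat" where
  "atgt n (Arr i) = Suc i mod n" | "atgt n (Star i) = i"

text \<open>Paths: trivial path at a vertex, or a nonempty list of composable arrows
  (written left to right).\<close>
datatype path = Triv nat | Pth "arr list"

fun valid_path :: "nat \<Rightarrow> path \<Rightarrow> bool" where
  "valid_path n (Triv v) = (v < n)"
| "valid_path n (Pth xs) =
     (xs \<noteq> [] \<and> (\<forall>x\<in>set xs. aidx x < n) \<and>
      (\<forall>j. Suc j < length xs \<longrightarrow> atgt n (xs ! j) = asrc n (xs ! Suc j)))"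

fun psrc :: "nat \<Rightarrow> path \<Rightarrow> nat" where
  "psrc n (Triv v) = v" | "psrc n (Pth xs) = asrc n (hd xs)"

fun ptgt :: "nat \<Rightarrow> path \<Rightarrow> nat" where
  "ptgt n (Triv v) = v" | "ptgt n (Pth xs) = atgt n (last xs)"

definition pconcat :: "nat \<Rightarrow> path \<Rightarrow> path \<Rightarrow> path option" where
  "pconcat n p r =
     (if ptgt n p = psrc n r then
        Some (case p of Triv _ \<Rightarrow> r
                      | Pth xs \<Rightarrow> (case r of Triv _ \<Rightarrow> p | Pth ys \<Rightarrow> Pth (xs @ ys)))
      else None)"

definition KQ :: "nat \<Rightarrow> (path \<Rightarrow> 'k::field) set" where
  "KQ n = {x. finite {r. x r \<noteq> 0} \<and> (\<forall>r. x r \<noteq> 0 \<longrightarrow> valid_path n r)}"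

definition pmul :: "nat \<Rightarrow> (path \<Rightarrow> 'k::field) \<Rightarrow> (path \<Rightarrow> 'k) \<Rightarrow> (path \<Rightarrow> 'k)" where
  "pmul n x y = (\<lambda>r. \<Sum>(p, s) \<in> {(p, s). x p \<noteq> 0 \<and> y s \<noteq> 0 \<and> pconcat n p s = Some r}.
                      x p * y s)"

definition pone :: "nat \<Rightarrow> (path \<Rightarrow> 'k::field)" where
  "pone n = (\<lambda>r. if (\<exists>v<n. r = Triv v) then 1 else 0)"

definition smult :: "'k::field \<Rightarrow> (path \<Rightarrow> 'k) \<Rightarrow> (path \<Rightarrow> 'k)" where
  "smult c x = (\<lambda>r. c * x r)"

definition kQ :: "nat \<Rightarrow> (path \<Rightarrow> 'k::field) ring" where
  "kQ n = \<lparr>carrier = KQ n, mult = pmul n, one = pone n, zero = (\<lambda>_. 0), add = (\<lambda>x y r. x r + y r)\<rparr>"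

definition pth :: "path \<Rightarrow> (path \<Rightarrow> 'k::field)" where
  "pth p = (\<lambda>r. if r = p then 1 else 0)"

definition ee :: "nat \<Rightarrow> (path \<Rightarrow> 'k::field)" where "ee i = pth (Triv i)"
definition aa :: "nat \<Rightarrow> (path \<Rightarrow> 'k::field)" where "aa i = pth (Pth [Arr i])"
definition ast :: "nat \<Rightarrow> (path \<Rightarrow> 'k::field)" where "ast i = pth (Pth [Star i])"

definition rels :: "nat \<Rightarrow> (nat \<Rightarrow> 'k::field) \<Rightarrow> (path \<Rightarrow> 'k) set" where
  "rels n q = {(\<lambda>r. pmul n (aa i) (ast i) r
                 - q i * pmul n (ast ((i + n - 1) mod n)) (aa ((i + n - 1) mod n)) r) | i. i < n}"

definition relideal :: "nat \<Rightarrow> (nat \<Rightarrow> 'k::field) \<Rightarrow> (path \<Rightarrow> 'k) set" where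
  "relideal n q = genideal (kQ n) (rels n q)"

definition Aq :: "nat \<Rightarrow> (nat \<Rightarrow> 'k::field) \<Rightarrow> (path \<Rightarrow> 'k) set ring" where
  "Aq n q = kQ n Quot relideal n q"

definition cls :: "nat \<Rightarrow> (nat \<Rightarrow> 'k::field) \<Rightarrow> (path \<Rightarrow> 'k) \<Rightarrow> (path \<Rightarrow> 'k) set" where
  "cls n q x = a_r_coset (kQ n) (relideal n q) x"

definition alg_iso :: "nat \<Rightarrow> (nat \<Rightarrow> 'k::field) \<Rightarrow> (nat \<Rightarrow> 'k)
                       \<Rightarrow> ((path \<Rightarrow> 'k) set \<Rightarrow> (path \<Rightarrow> 'k) set) \<Rightarrow> bool" where
  "alg_iso n q p f \<longleftrightarrow>
     f \<in> ring_iso (Aq n q) (Aq n p) \<and>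
     (\<forall>c x y. x \<in> KQ n \<longrightarrow> y \<in> KQ n \<longrightarrow> f (cls n q x) = cls n p y
              \<longrightarrow> f (cls n q (smult c x)) = cls n p (smult c y))"

end

theory Submission
  imports Defs
begin

lemma coset_image:
  fixes R (structure)
  assumes "ring R" "F \<in> ring_hom R R" "I \<subseteq> carrier R" "x \<in> carrier R"
  shows "F ` (I +> x) = (F ` I) +> F x"
proof -
  interpret ring R by fact
  have eq: "\<And>h. h \<in> I \<Longrightarrow> F (h \<oplus> x) = F h \<oplus> F x"
    using assms ring_hom_add by (metis subsetD)
  have "F ` (\<Union>h\<in>I. {h \<oplus> x}) = (\<Union>h\<in>I. {F (h \<oplus> x)})" by blast
  also have "\<dots> = (\<Union>h\<in>I. {F h \<oplus> F x})" using eq by simp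
  also have "\<dots> = (\<Union>h\<in>F ` I. {h \<oplus> F x})" by blast
  finally show ?thesis unfolding a_r_coset_def' .
qed

lemma quot_iso_gen:
  fixes R (structure)
  assumes R: "ring R" and I: "ideal I R" and J: "ideal J R" and F: "F \<in> ring_hom R R"
    and bij: "bij_betw F (carrier R) (carrier R)" and FI: "F ` I = J"
  shows "(\<lambda>X. F ` X) \<in> ring_iso (R Quot I) (R Quot J)"
proof -
  interpret ring R by fact
  have Ic: "I \<subseteq> carrier R" using ideal.Icarr[OF I] by blast
  have Jc: "J \<subseteq> carrier R" using ideal.Icarr[OF J] by blast
  have ci: "\<And>x. x \<in> carrier R \<Longrightarrow> F ` (I +> x) = J +> F x"
    using coset_image[OF R F Ic] FI by simp
  have Fc: "\<And>x. x \<in> carrier R \<Longrightarrow> F x \<in> carrier R" using ring_hom_closed[OF F] by blast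
  have carrI: "carrier (R Quot I) = {I +> x | x. x \<in> carrier R}"
    unfolding FactRing_def A_RCOSETS_def' by auto
  have carrJ: "carrier (R Quot J) = {J +> x | x. x \<in> carrier R}"
    unfolding FactRing_def A_RCOSETS_def' by auto
  show ?thesis
  proof (rule ring_iso_memI)
    fix X assume "X \<in> carrier (R Quot I)"
    then obtain x where x: "x \<in> carrier R" "X = I +> x" using carrI by auto
    then show "F ` X \<in> carrier (R Quot J)" using ci Fc carrJ by auto
  next
    fix X Y assume "X \<in> carrier (R Quot I)" "Y \<in> carrier (R Quot I)"
    then obtain x y where x: "x \<in> carrier R" "X = I +> x" "y \<in> carrier R" "Y = I +> y" using carrI by auto
    have "X \<otimes>\<^bsub>R Quot I\<^esub> Y = rcoset_mult R I X Y" by (simp add: FactRing_def)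
    also have "\<dots> = I +> (x \<otimes> y)" unfolding x(2) x(4) by (rule ideal.rcoset_mult_add[OF I x(1) x(3)])
    finally have 1: "X \<otimes>\<^bsub>R Quot I\<^esub> Y = I +> (x \<otimes> y)" .
    have 2: "F (x \<otimes> y) = F x \<otimes> F y" by (rule ring_hom_mult[OF F x(1) x(3)])
    have "F ` (X \<otimes>\<^bsub>R Quot I\<^esub> Y) = J +> (F x \<otimes> F y)"
      unfolding 1 2[symmetric] by (rule ci) (use x in simp)
    also have "\<dots> = rcoset_mult R J (J +> F x) (J +> F y)"
      by (rule ideal.rcoset_mult_add[OF J Fc[OF x(1)] Fc[OF x(3)], symmetric])
    also have "\<dots> = (J +> F x) \<otimes>\<^bsub>R Quot J\<^esub> (J +> F y)" by (simp add: FactRing_def)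
    finally show "F ` (X \<otimes>\<^bsub>R Quot I\<^esub> Y) = F ` X \<otimes>\<^bsub>R Quot J\<^esub> F ` Y"
      using ci x by simp
  next
    fix X Y assume "X \<in> carrier (R Quot I)" "Y \<in> carrier (R Quot I)"
    then obtain x y where x: "x \<in> carrier R" "X = I +> x" "y \<in> carrier R" "Y = I +> y" using carrI by auto
    have "X \<oplus>\<^bsub>R Quot I\<^esub> Y = X <+> Y" by (simp add: FactRing_def)
    also have "\<dots> = I +> (x \<oplus> y)" unfolding x(2) x(4) by (rule ideal.a_rcos_sum[OF I x(1) x(3)])
    finally have 1: "X \<oplus>\<^bsub>R Quot I\<^esub> Y = I +> (x \<oplus> y)" .
    have 2: "F (x \<oplus> y) = F x \<oplus> F y" by (rule ring_hom_add[OF F x(1) x(3)])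
    have "F ` (X \<oplus>\<^bsub>R Quot I\<^esub> Y) = J +> (F x \<oplus> F y)"
      unfolding 1 2[symmetric] by (rule ci) (use x in simp)
    also have "\<dots> = (J +> F x) <+> (J +> F y)"
      by (rule ideal.a_rcos_sum[OF J Fc[OF x(1)] Fc[OF x(3)], symmetric])
    also have "\<dots> = (J +> F x) \<oplus>\<^bsub>R Quot J\<^esub> (J +> F y)" by (simp add: FactRing_def)
    finally show "F ` (X \<oplus>\<^bsub>R Quot I\<^esub> Y) = F ` X \<oplus>\<^bsub>R Quot J\<^esub> F ` Y"
      using ci x by simp
  next
    have "F ` (I +> \<one>) = J +> F \<one>" by (rule ci) simp
    then show "F ` \<one>\<^bsub>R Quot I\<^esub> = \<one>\<^bsub>R Quot J\<^esub>"
      using ring_hom_one[OF F] by (simp add: FactRing_def)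
  next
    show "bij_betw (\<lambda>X. F ` X) (carrier (R Quot I)) (carrier (R Quot J))"
    proof (rule bij_betw_imageI)
      have inj: "inj_on F (carrier R)" using bij bij_betw_def by blast
      show "inj_on (\<lambda>X. F ` X) (carrier (R Quot I))"
      proof (rule inj_onI)
        fix X Y assume "X \<in> carrier (R Quot I)" "Y \<in> carrier (R Quot I)" "F ` X = F ` Y"
        moreover have "X \<subseteq> carrier R" "Y \<subseteq> carrier R"
          using calculation(1,2) carrI a_r_coset_subset_G[OF Ic] by blast+
        ultimately show "X = Y" using inj inj_on_image_eq_iff by metis
      qed
      show "(\<lambda>X. F ` X) ` carrier (R Quot I) = carrier (R Quot J)"
      proof
        show "(\<lambda>X. F ` X) ` carrier (R Quot I) \<subseteq> carrier (R Quot J)"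
        proof
          fix Z assume "Z \<in> (\<lambda>X. F ` X) ` carrier (R Quot I)"
          then obtain X where X: "X \<in> carrier (R Quot I)" "Z = F ` X" by blast
          then obtain x where x: "x \<in> carrier R" "X = I +> x" using carrI by blast
          then show "Z \<in> carrier (R Quot J)" using ci Fc carrJ X by auto
        qed
        show "carrier (R Quot J) \<subseteq> (\<lambda>X. F ` X) ` carrier (R Quot I)"
        proof
          fix Y assume "Y \<in> carrier (R Quot J)"
          then obtain y where y: "y \<in> carrier R" "Y = J +> y" using carrJ by auto
          then obtain x where x: "x \<in> carrier R" "y = F x" using bij bij_betw_def by (metis imageE)
          then show "Y \<in> (\<lambda>X. F ` X) ` carrier (R Quot I)" using y ci carrI by auto
        qed
      qed
    qed
  qed
qed

lemma genideal_image:
  fixes R (structure)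
  assumes R: "ring R" and F: "F \<in> ring_hom R R" and G: "G \<in> ring_hom R R"
    and FG: "\<And>y. y \<in> carrier R \<Longrightarrow> F (G y) = y"
    and S: "S \<subseteq> carrier R" and T: "T \<subseteq> carrier R"
    and FS: "F ` S \<subseteq> genideal R T" and GT: "G ` T \<subseteq> genideal R S"
  shows "F ` genideal R S = genideal R T"
proof -
  interpret ring R by fact
  interpret hF: ring_hom_ring R R F by (simp add: F R ring_hom_ringI2)
  interpret hG: ring_hom_ring R R G by (simp add: G R ring_hom_ringI2)
  have IT: "ideal (genideal R T) R" using genideal_ideal T by blast
  have IS: "ideal (genideal R S) R" using genideal_ideal S by blast
  have "genideal R S \<subseteq> {r \<in> carrier R. F r \<in> genideal R T}"
    by (rule genideal_minimal[OF hF.ideal_vimage[OF IT]]) (use S FS in auto)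
  then have 1: "F ` genideal R S \<subseteq> genideal R T" by auto
  have "genideal R T \<subseteq> {r \<in> carrier R. G r \<in> genideal R S}"
    by (rule genideal_minimal[OF hG.ideal_vimage[OF IS]]) (use T GT in auto)
  then have 2: "genideal R T \<subseteq> F ` genideal R S" using FG by (auto intro!: image_eqI)
  from 1 2 show ?thesis by blast
qed


fun relab :: "(nat \<Rightarrow> nat) \<Rightarrow> (arr \<Rightarrow> arr) \<Rightarrow> path \<Rightarrow> path" where
  "relab h ga (Triv v) = Triv (h v)" | "relab h ga (Pth xs) = Pth (map ga xs)"

definition goodmap :: "nat \<Rightarrow> (nat \<Rightarrow> nat) \<Rightarrow> (arr \<Rightarrow> arr) \<Rightarrow> bool" where
  "goodmap n h ga \<longleftrightarrow> (\<forall>v<n. h v < n) \<and>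
     (\<forall>x. aidx x < n \<longrightarrow> aidx (ga x) < n \<and> asrc n (ga x) = h (asrc n x) \<and> atgt n (ga x) = h (atgt n x))"

definition invpair :: "nat \<Rightarrow> (nat \<Rightarrow> nat) \<Rightarrow> (arr \<Rightarrow> arr) \<Rightarrow> (nat \<Rightarrow> nat) \<Rightarrow> (arr \<Rightarrow> arr) \<Rightarrow> bool" where
  "invpair n h ga h' ga' \<longleftrightarrow> (\<forall>v<n. h' (h v) = v) \<and> (\<forall>x. aidx x < n \<longrightarrow> ga' (ga x) = x)"

lemma asrc_lt: "aidx x < n \<Longrightarrow> asrc n x < n \<and> atgt n x < n"
  by (cases x) auto

lemma valid_ends: "valid_path n r \<Longrightarrow> psrc n r < n \<and> ptgt n r < n"
  by (cases r) (auto simp: asrc_lt)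

lemma valid_relab:
  assumes g: "goodmap n h ga" and v: "valid_path n r"
  shows "valid_path n (relab h ga r)"
proof (cases r)
  case (Triv v) then show ?thesis using g v by (auto simp: goodmap_def)
next
  case (Pth xs)
  have "\<forall>x\<in>set xs. aidx x < n" using v Pth by auto
  moreover have "\<And>j. Suc j < length xs \<Longrightarrow> atgt n (xs ! j) = asrc n (xs ! Suc j)" using v Pth by auto
  ultimately show ?thesis using Pth v g unfolding goodmap_def
    by (auto simp: nth_mem)
qed

lemma relab_inv:
  assumes "invpair n h ga h' ga'" "valid_path n r"
  shows "relab h' ga' (relab h ga r) = r"
  using assms by (cases r) (auto simp: invpair_def intro!: map_idI)

lemma relab_ends:
  assumes g: "goodmap n h ga" and v: "valid_path n r"
  shows "psrc n (relab h ga r) = h (psrc n r) \<and> ptgt n (relab h ga r) = h (ptgt n r)"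
proof (cases r)
  case (Triv v) then show ?thesis by simp
next
  case (Pth xs)
  then have "xs \<noteq> []" "\<forall>x\<in>set xs. aidx x < n" using v by auto
  then show ?thesis using Pth g unfolding goodmap_def by (auto simp: hd_map last_map)
qed

lemma relab_concat:
  assumes g: "goodmap n h ga" and ip: "invpair n h ga h' ga'"
    and va: "valid_path n a" and vb: "valid_path n b"
  shows "pconcat n (relab h ga a) (relab h ga b) = map_option (relab h ga) (pconcat n a b)"
proof -
  have inj: "\<And>u v. u < n \<Longrightarrow> v < n \<Longrightarrow> h u = h v \<longleftrightarrow> u = v" using ip unfolding invpair_def by metis
  have e: "ptgt n (relab h ga a) = psrc n (relab h ga b) \<longleftrightarrow> ptgt n a = psrc n b"
    using relab_ends[OF g va] relab_ends[OF g vb] valid_ends[OF va] valid_ends[OF vb] inj by simp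
  show ?thesis unfolding pconcat_def e
    by (cases a; cases b) auto
qed

lemma valid_concat:
  assumes va: "valid_path n a" and vb: "valid_path n b" and c: "pconcat n a b = Some c"
  shows "valid_path n c"
proof -
  have e: "ptgt n a = psrc n b" using c unfolding pconcat_def by (auto split: if_splits)
  show ?thesis
  proof (cases a)
    case (Triv u) then show ?thesis using c vb e unfolding pconcat_def by auto
  next
    case (Pth xs)
    note Pa = Pth
    show ?thesis
    proof (cases b)
      case (Triv u) then show ?thesis using c va e Pa unfolding pconcat_def by auto
    next
      case (Pth ys)
      note Pth2 = Pth
      have cc: "c = Pth (xs @ ys)" using c Pa Pth2 e unfolding pconcat_def by auto
      have xs: "xs \<noteq> []" "\<forall>x\<in>set xs. aidx x < n" "\<And>j. Suc j < length xs \<Longrightarrow> atgt n (xs ! j) = asrc n (xs ! Suc j)"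
        using va Pa by auto
      have ys: "ys \<noteq> []" "\<forall>x\<in>set ys. aidx x < n" "\<And>j. Suc j < length ys \<Longrightarrow> atgt n (ys ! j) = asrc n (ys ! Suc j)"
        using vb Pth2 by auto
      have j: "atgt n (last xs) = asrc n (hd ys)" using e Pa Pth2 by simp
      have "atgt n ((xs @ ys) ! j) = asrc n ((xs @ ys) ! Suc j)" if "Suc j < length (xs @ ys)" for j
      proof -
        consider "Suc j < length xs" | "Suc j = length xs" | "Suc j > length xs" by linarith
        then show ?thesis
        proof cases
          case 1 then show ?thesis using xs by (simp add: nth_append)
        next
          case 2
          then have jj: "j = length xs - Suc 0" by simp
          show ?thesis using 2 j xs ys unfolding jj
            by (simp add: nth_append last_conv_nth hd_conv_nth)
        next
          case 3
          then have "Suc (j - length xs) < length ys" "Suc j - length xs = Suc (j - length xs)" using that by auto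
          then show ?thesis using 3 ys(3)[of "j - length xs"] by (simp add: nth_append)
        qed
      qed
      then show ?thesis using cc xs ys by auto
    qed
  qed
qed


lemma kQ_simps [simp]:
  "carrier (kQ n) = KQ n" "mult (kQ n) = pmul n" "one (kQ n) = pone n"
  "zero (kQ n) = (\<lambda>_. 0)" "add (kQ n) = (\<lambda>x y r. x r + y r)"
  by (simp_all add: kQ_def)

definition Fm :: "nat \<Rightarrow> (path \<Rightarrow> path) \<Rightarrow> (path \<Rightarrow> 'k::field) \<Rightarrow> (path \<Rightarrow> 'k) \<Rightarrow> (path \<Rightarrow> 'k)" where
  "Fm n g w x = (\<lambda>r. if valid_path n r then w r * x (g r) else 0)"

lemma KQ_valid: "x \<in> KQ n \<Longrightarrow> x r \<noteq> 0 \<Longrightarrow> valid_path n r"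
  by (auto simp: KQ_def)

lemma KQ_zero: "x \<in> KQ n \<Longrightarrow> \<not> valid_path n r \<Longrightarrow> x r = 0"
  using KQ_valid by blast

lemma KQ_fin: "x \<in> KQ n \<Longrightarrow> finite {r. x r \<noteq> 0}"
  by (auto simp: KQ_def)

lemma Fm_KQ:
  assumes "\<And>r. valid_path n r \<Longrightarrow> M (g r) = r" and x: "x \<in> KQ n"
  shows "Fm n g w x \<in> KQ n"
proof -
  have "{r. Fm n g w x r \<noteq> 0} \<subseteq> M ` {s. x s \<noteq> 0}"
  proof
    fix r assume "r \<in> {r. Fm n g w x r \<noteq> 0}"
    then have "valid_path n r" "x (g r) \<noteq> 0" by (auto simp: Fm_def split: if_splits)
    then show "r \<in> M ` {s. x s \<noteq> 0}" using assms(1) by (metis (mono_tags, lifting) image_eqI mem_Collect_eq)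
  qed
  then have "finite {r. Fm n g w x r \<noteq> 0}" using KQ_fin[OF x] finite_subset by blast
  moreover have "\<forall>r. Fm n g w x r \<noteq> 0 \<longrightarrow> valid_path n r" by (auto simp: Fm_def)
  ultimately show ?thesis by (simp add: KQ_def)
qed

lemma Fm_lin: "Fm n g w (\<lambda>r. a r - c * b r) = (\<lambda>r. Fm n g w a r - c * Fm n g w b r)"
  by (auto simp: Fm_def fun_eq_iff algebra_simps)

lemma Fm_add: "Fm n g w (\<lambda>r. a r + b r) = (\<lambda>r. Fm n g w a r + Fm n g w b r)"
  by (auto simp: Fm_def fun_eq_iff algebra_simps)

lemma Fm_smult: "Fm n g w (smult c a) = smult c (Fm n g w a)"
  by (auto simp: Fm_def smult_def fun_eq_iff algebra_simps)

lemma pmul_smult_left: "pmul n (smult c x) y = smult c (pmul n x y)"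
proof (cases "c = 0")
  case True then show ?thesis by (simp add: pmul_def smult_def fun_eq_iff)
next
  case False
  then have "{(p, s). smult c x p \<noteq> 0 \<and> y s \<noteq> 0 \<and> pconcat n p s = Some r}
     = {(p, s). x p \<noteq> 0 \<and> y s \<noteq> 0 \<and> pconcat n p s = Some r}" for r
    by (auto simp: smult_def)
  then show ?thesis
    by (simp add: pmul_def smult_def fun_eq_iff sum_distrib_left case_prod_unfold mult.assoc)
qed

lemma pmul_smult_right: "pmul n x (smult c y) = smult c (pmul n x y)"
proof (cases "c = 0")
  case True then show ?thesis by (simp add: pmul_def smult_def fun_eq_iff)
next
  case False
  then have "{(p, s). x p \<noteq> 0 \<and> smult c y s \<noteq> 0 \<and> pconcat n p s = Some r}
     = {(p, s). x p \<noteq> 0 \<and> y s \<noteq> 0 \<and> pconcat n p s = Some r}" for r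
    by (auto simp: smult_def)
  then show ?thesis
    by (simp add: pmul_def smult_def fun_eq_iff sum_distrib_left case_prod_unfold algebra_simps)
qed

lemma smult_KQ: "x \<in> KQ n \<Longrightarrow> smult c x \<in> KQ n"
proof -
  assume x: "x \<in> KQ n"
  have "{r. smult c x r \<noteq> 0} \<subseteq> {r. x r \<noteq> 0}" by (auto simp: smult_def)
  then show ?thesis using x finite_subset unfolding KQ_def by (auto simp: smult_def)
qed

lemma pth_KQ: "valid_path n p \<Longrightarrow> pth p \<in> KQ n"
proof -
  assume "valid_path n p"
  moreover have "{r. pth p r \<noteq> (0::'a::field)} = {p}" by (auto simp: pth_def)
  ultimately show "pth p \<in> (KQ n :: (path \<Rightarrow> 'a) set)" unfolding KQ_def by (auto simp: pth_def)
qed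

locale pm =
  fixes n :: nat and h ga h' ga' and w :: "path \<Rightarrow> 'k::field"
  assumes g1: "goodmap n h ga" and g2: "goodmap n h' ga'"
    and i1: "invpair n h ga h' ga'" and i2: "invpair n h' ga' h ga"
    and wnz: "\<And>r. valid_path n r \<Longrightarrow> w r \<noteq> 0"
    and wmul: "\<And>a b c. valid_path n a \<Longrightarrow> valid_path n b \<Longrightarrow> pconcat n a b = Some c \<Longrightarrow> w c = w a * w b"
    and wtriv: "\<And>v. v < n \<Longrightarrow> w (Triv v) = 1"
begin

abbreviation "M \<equiv> relab h ga"
abbreviation "g \<equiv> relab h' ga'"
abbreviation "F \<equiv> Fm n g w"
abbreviation "w' \<equiv> (\<lambda>s. inverse (w (M s)))"
abbreviation "G \<equiv> Fm n M w'"

lemma Mg: "valid_path n r \<Longrightarrow> M (g r) = r" using relab_inv[OF i2] .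
lemma gM: "valid_path n r \<Longrightarrow> g (M r) = r" using relab_inv[OF i1] .
lemma vM: "valid_path n r \<Longrightarrow> valid_path n (M r)" using valid_relab[OF g1] .
lemma vg: "valid_path n r \<Longrightarrow> valid_path n (g r)" using valid_relab[OF g2] .

lemma F_KQ: "x \<in> KQ n \<Longrightarrow> F x \<in> KQ n" using Fm_KQ Mg by blast
lemma G_KQ: "x \<in> KQ n \<Longrightarrow> G x \<in> KQ n" using Fm_KQ gM by blast

lemma FG: "x \<in> KQ n \<Longrightarrow> F (G x) = x"
  by (auto simp: Fm_def fun_eq_iff vg Mg wnz KQ_zero)

lemma GF: "x \<in> KQ n \<Longrightarrow> G (F x) = x"
  by (auto simp: Fm_def fun_eq_iff vM gM wnz vM KQ_zero)

lemma F_bij: "bij_betw F (KQ n) (KQ n)"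
  by (rule bij_betw_byWitness[where f'=G]) (auto simp: FG GF F_KQ G_KQ)

lemma F_one: "F (pone n) = pone n"
proof
  fix r
  show "F (pone n) r = pone n r"
  proof (cases "valid_path n r")
    case False
    then show ?thesis by (auto simp: Fm_def pone_def)
  next
    case True
    show ?thesis
    proof (cases r)
      case (Triv v)
      then have "v < n" "h' v < n" using True g2 by (auto simp: goodmap_def)
      then show ?thesis using Triv wtriv by (auto simp: Fm_def pone_def)
    qed (auto simp: Fm_def pone_def)
  qed
qed

lemma F_pth: "valid_path n s \<Longrightarrow> F (pth s) = smult (w (M s)) (pth (M s))"
  by (auto simp: Fm_def fun_eq_iff smult_def pth_def vM gM Mg)

lemma F_mult:
  assumes x: "x \<in> KQ n" and y: "y \<in> KQ n"
  shows "F (pmul n x y) = pmul n (F x) (F y)"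
proof
  fix r
  show "F (pmul n x y) r = pmul n (F x) (F y) r"
  proof (cases "valid_path n r")
    case False
    have E: "{(a, b). F x a \<noteq> 0 \<and> F y b \<noteq> 0 \<and> pconcat n a b = Some r} = {}"
    proof -
      { fix a b assume "F x a \<noteq> 0" "F y b \<noteq> 0" "pconcat n a b = Some r"
        then have "valid_path n r" using valid_concat by (metis Fm_def)
        with False have False by simp }
      then show ?thesis by auto
    qed
    have "pmul n (F x) (F y) r = 0" unfolding pmul_def E by simp
    then show ?thesis using False by (simp add: Fm_def)
  next
    case True
    let ?S1 = "{(a, b). F x a \<noteq> 0 \<and> F y b \<noteq> 0 \<and> pconcat n a b = Some r}"
    let ?S2 = "{(c, d). x c \<noteq> 0 \<and> y d \<noteq> 0 \<and> pconcat n c d = Some (g r)}"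
    have "(\<Sum>(a, b)\<in>?S1. F x a * F y b) = (\<Sum>(c, d)\<in>?S2. w r * (x c * y d))"
    proof (rule sum.reindex_bij_witness[where i = "\<lambda>(c, d). (M c, M d)" and j = "\<lambda>(a, b). (g a, g b)"])
      fix ab assume "ab \<in> ?S1"
      then obtain a b where ab: "ab = (a, b)" "F x a \<noteq> 0" "F y b \<noteq> 0" "pconcat n a b = Some r" by auto
      then have va: "valid_path n a" "valid_path n b" "x (g a) \<noteq> 0" "y (g b) \<noteq> 0"
        by (auto simp: Fm_def split: if_splits)
      show "(case (case ab of (a, b) \<Rightarrow> (g a, g b)) of (c, d) \<Rightarrow> (M c, M d)) = ab"
        using ab va Mg by simp
      have "pconcat n (g a) (g b) = Some (g r)" using relab_concat[OF g2 i2 va(1,2)] ab by simp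
      then show "(case ab of (a, b) \<Rightarrow> (g a, g b)) \<in> ?S2" using ab va by simp
      have "w r = w a * w b" using wmul va ab by blast
      then show "(case (case ab of (a, b) \<Rightarrow> (g a, g b)) of (c, d) \<Rightarrow> w r * (x c * y d)) =
          (case ab of (a, b) \<Rightarrow> F x a * F y b)"
        using ab va by (simp add: Fm_def)
    next
      fix cd assume "cd \<in> ?S2"
      then obtain c d where cd: "cd = (c, d)" "x c \<noteq> 0" "y d \<noteq> 0" "pconcat n c d = Some (g r)" by auto
      then have vc: "valid_path n c" "valid_path n d" using x y KQ_valid by auto
      show "(case (case cd of (c, d) \<Rightarrow> (M c, M d)) of (a, b) \<Rightarrow> (g a, g b)) = cd"
        using cd vc gM by simp
      have "pconcat n (M c) (M d) = Some (M (g r))" using relab_concat[OF g1 i1 vc] cd by simp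
      then have "pconcat n (M c) (M d) = Some r" using Mg True by simp
      moreover have "F x (M c) \<noteq> 0" "F y (M d) \<noteq> 0"
        using cd vc vM gM wnz by (auto simp: Fm_def)
      ultimately show "(case cd of (c, d) \<Rightarrow> (M c, M d)) \<in> ?S1" using cd by simp
    qed
    also have "\<dots> = w r * (\<Sum>(c, d)\<in>?S2. x c * y d)"
      by (simp add: sum_distrib_left case_prod_unfold)
    finally show ?thesis using True by (simp add: Fm_def pmul_def)
  qed
qed

lemma F_hom: "F \<in> ring_hom (kQ n) (kQ n)"
  by (rule ring_hom_memI) (auto simp: F_KQ F_mult F_one Fm_add)

lemma pm_swap: "pm n h' ga' h ga w'"
proof
  show "goodmap n h' ga'" "goodmap n h ga" "invpair n h' ga' h ga" "invpair n h ga h' ga'"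
    using g1 g2 i1 i2 by auto
  show "\<And>r. valid_path n r \<Longrightarrow> w' r \<noteq> 0" using wnz vM by simp
  show "\<And>v. v < n \<Longrightarrow> w' (Triv v) = 1" using wtriv g1 by (simp add: goodmap_def)
  fix a b c assume "valid_path n a" "valid_path n b" "pconcat n a b = Some c"
  moreover have "pconcat n (M a) (M b) = Some (M c)" using relab_concat[OF g1 i1] calculation by simp
  ultimately have "w (M c) = w (M a) * w (M b)" using wmul vM by blast
  then show "w' c = w' a * w' b" by (simp add: inverse_mult_distrib)
qed

end


definition relq :: "nat \<Rightarrow> (nat \<Rightarrow> 'k::field) \<Rightarrow> nat \<Rightarrow> (path \<Rightarrow> 'k)" where
  "relq n q i = (\<lambda>r. pmul n (aa i) (ast i) r
                 - q i * pmul n (ast ((i + n - 1) mod n)) (aa ((i + n - 1) mod n)) r)"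

lemma rels_eq: "rels n q = relq n q ` {..<n}"
  unfolding rels_def relq_def by auto

lemma aa_KQ: "i < n \<Longrightarrow> aa i \<in> KQ n" unfolding aa_def by (rule pth_KQ) simp
lemma ast_KQ: "i < n \<Longrightarrow> ast i \<in> KQ n" unfolding ast_def by (rule pth_KQ) simp
lemma ee_KQ: "i < n \<Longrightarrow> ee i \<in> KQ n" unfolding ee_def by (rule pth_KQ) simp

lemma relq_KQ:
  fixes q :: "nat \<Rightarrow> 'k::field"
  assumes R: "ring (kQ n :: (path \<Rightarrow> 'k) ring)" and i: "i < n"
  shows "relq n q i \<in> KQ n"
proof -
  interpret ring "kQ n :: (path \<Rightarrow> 'k) ring" by (rule R)
  have j: "(i + n - 1) mod n < n" using i by simp
  have A: "pmul n (aa i) (ast i) \<in> (KQ n :: (path \<Rightarrow> 'k) set)"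
    using m_closed[of "aa i" "ast i"] aa_KQ[OF i] ast_KQ[OF i] by simp
  have B: "pmul n (ast ((i + n - 1) mod n)) (aa ((i + n - 1) mod n)) \<in> (KQ n :: (path \<Rightarrow> 'k) set)"
    using m_closed[of "ast ((i + n - 1) mod n)" "aa ((i + n - 1) mod n)"] aa_KQ[OF j] ast_KQ[OF j] by simp
  have C: "smult (- q i) (pmul n (ast ((i + n - 1) mod n)) (aa ((i + n - 1) mod n))) \<in> KQ n"
    using smult_KQ B by blast
  have "relq n q i = (\<lambda>r. pmul n (aa i) (ast i) r + smult (- q i) (pmul n (ast ((i + n - 1) mod n)) (aa ((i + n - 1) mod n))) r)"
    by (simp add: relq_def smult_def fun_eq_iff)
  moreover have "(\<lambda>r. pmul n (aa i) (ast i) r + smult (- q i) (pmul n (ast ((i + n - 1) mod n)) (aa ((i + n - 1) mod n))) r) \<in> carrier (kQ n)"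
    using a_closed[of "pmul n (aa i) (ast i)" "smult (- q i) (pmul n (ast ((i + n - 1) mod n)) (aa ((i + n - 1) mod n)))"] A C by simp
  ultimately show ?thesis by simp
qed

lemma rels_sub:
  fixes q :: "nat \<Rightarrow> 'k::field"
  assumes R: "ring (kQ n :: (path \<Rightarrow> 'k) ring)"
  shows "rels n q \<subseteq> KQ n"
  unfolding rels_eq using relq_KQ[OF R] by auto

lemma smult_as_mult:
  fixes z :: "path \<Rightarrow> 'k::field"
  assumes R: "ring (kQ n :: (path \<Rightarrow> 'k) ring)" and z: "z \<in> KQ n"
  shows "smult c z = pmul n (smult c (pone n)) z"
proof -
  interpret ring "kQ n :: (path \<Rightarrow> 'k) ring" by (rule R)
  have "pmul n (pone n) z = z" using l_one[of z] z by simp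
  then show ?thesis by (simp add: pmul_smult_left)
qed

lemma pone_KQ:
  assumes R: "ring (kQ n :: (path \<Rightarrow> 'k::field) ring)"
  shows "(pone n :: path \<Rightarrow> 'k) \<in> KQ n"
proof -
  interpret ring "kQ n :: (path \<Rightarrow> 'k) ring" by (rule R)
  show ?thesis using one_closed by simp
qed

lemma ideal_smult:
  fixes z :: "path \<Rightarrow> 'k::field"
  assumes R: "ring (kQ n :: (path \<Rightarrow> 'k) ring)" and J: "ideal J (kQ n)" and z: "z \<in> J"
  shows "smult c z \<in> J"
proof -
  have zc: "z \<in> KQ n" using ideal.Icarr[OF J z] by simp
  have sc: "smult c (pone n) \<in> (KQ n :: (path \<Rightarrow> 'k) set)" using smult_KQ pone_KQ[OF R] by blast
  have "pmul n (smult c (pone n)) z \<in> J"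
    using ideal.I_l_closed[OF J z, of "smult c (pone n)"] sc by simp
  then show ?thesis using smult_as_mult[OF R zc] by simp
qed

lemma relideal_ideal:
  fixes q :: "nat \<Rightarrow> 'k::field"
  assumes R: "ring (kQ n :: (path \<Rightarrow> 'k) ring)"
  shows "ideal (relideal n q) (kQ n)"
proof -
  interpret ring "kQ n :: (path \<Rightarrow> 'k) ring" by (rule R)
  show ?thesis unfolding relideal_def using genideal_ideal rels_sub[OF R] by simp
qed

lemma relq_in:
  fixes q :: "nat \<Rightarrow> 'k::field"
  assumes R: "ring (kQ n :: (path \<Rightarrow> 'k) ring)" and i: "i < n"
  shows "relq n q i \<in> relideal n q"
proof -
  interpret ring "kQ n :: (path \<Rightarrow> 'k) ring" by (rule R)
  have "relq n q i \<in> rels n q" using i rels_eq by blast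
  then show ?thesis unfolding relideal_def using genideal_self[of "rels n q"] rels_sub[OF R] by auto
qed

lemma smult_relq_in:
  fixes q :: "nat \<Rightarrow> 'k::field"
  assumes R: "ring (kQ n :: (path \<Rightarrow> 'k) ring)" and i: "i < n"
  shows "smult c (relq n q i) \<in> relideal n q"
  using ideal_smult[OF R relideal_ideal[OF R] relq_in[OF R i]] .

context pm begin

lemma main_iso:
  assumes R: "ring (kQ n :: (path \<Rightarrow> 'k) ring)"
    and Fr: "\<And>i. i < n \<Longrightarrow> F (relq n q i) \<in> relideal n p"
    and Gr: "\<And>i. i < n \<Longrightarrow> G (relq n p i) \<in> relideal n q"
  shows "\<exists>f. alg_iso n q p f \<and> (\<forall>x\<in>KQ n. f (cls n q x) = cls n p (F x))"
proof -
  interpret pG: pm n h' ga' h ga w' by (rule pm_swap)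
  have Fh: "F \<in> ring_hom (kQ n) (kQ n)" by (rule F_hom)
  have Gh: "G \<in> ring_hom (kQ n) (kQ n)" by (rule pG.F_hom)
  have FI: "F ` relideal n q = relideal n p"
    unfolding relideal_def
  proof (rule genideal_image[OF R Fh Gh])
    show "\<And>y. y \<in> carrier (kQ n) \<Longrightarrow> F (G y) = y" using FG by simp
    show "rels n q \<subseteq> carrier (kQ n)" "rels n p \<subseteq> carrier (kQ n)" using rels_sub[OF R] by auto
    show "F ` rels n q \<subseteq> genideal (kQ n) (rels n p)" using Fr unfolding rels_eq relideal_def by auto
    show "G ` rels n p \<subseteq> genideal (kQ n) (rels n q)" using Gr unfolding rels_eq relideal_def by auto
  qed
  have iso: "(\<lambda>X. F ` X) \<in> ring_iso (kQ n Quot relideal n q) (kQ n Quot relideal n p)"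
    by (rule quot_iso_gen[OF R relideal_ideal[OF R] relideal_ideal[OF R] Fh _ FI]) (simp add: F_bij)
  have Iq: "relideal n q \<subseteq> KQ n" using ideal.Icarr[OF relideal_ideal[OF R]] by fastforce
  have cl: "F ` (cls n q x) = cls n p (F x)" if x: "x \<in> KQ n" for x
    unfolding cls_def using coset_image[OF R Fh, of "relideal n q" x] Iq x FI by simp
  have lin: "F ` (cls n q (smult c x)) = cls n p (smult c y)"
    if x: "x \<in> KQ n" and y: "y \<in> KQ n" and e: "F ` (cls n q x) = cls n p y" for c x y
  proof -
    interpret J: ideal "relideal n p" "kQ n" by (rule relideal_ideal[OF R])
    have Fx: "F x \<in> KQ n" using F_KQ x by blast
    have e2: "cls n p (F x) = cls n p y" using e cl x by simp
    have sc: "smult c (pone n) \<in> KQ n" using smult_KQ pone_KQ[OF R] by blast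
    have fs: "F (smult c x) = smult c (F x)" by (rule Fm_smult)
    have "F ` (cls n q (smult c x)) = cls n p (smult c (F x))" using cl[OF smult_KQ[where c=c, OF x]] unfolding fs .
    also have "\<dots> = cls n p (pmul n (smult c (pone n)) (F x))" using smult_as_mult[OF R Fx] by simp
    also have "\<dots> = rcoset_mult (kQ n) (relideal n p) (cls n p (smult c (pone n))) (cls n p (F x))"
      unfolding cls_def using J.rcoset_mult_add[of "smult c (pone n)" "F x"] sc Fx by simp
    also have "\<dots> = rcoset_mult (kQ n) (relideal n p) (cls n p (smult c (pone n))) (cls n p y)"
      using e2 by simp
    also have "\<dots> = cls n p (pmul n (smult c (pone n)) y)"
      unfolding cls_def using J.rcoset_mult_add[of "smult c (pone n)" y] sc y by simp
    also have "\<dots> = cls n p (smult c y)" using smult_as_mult[OF R y] by simp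
    finally show ?thesis .
  qed
  show ?thesis
    apply (rule exI[of _ "\<lambda>X. F ` X"])
    using iso lin cl unfolding alg_iso_def Aq_def by blast
qed

end


lemma relideal_nonring:
  fixes q :: "nat \<Rightarrow> 'k::field"
  assumes "\<not> ring (kQ n :: (path \<Rightarrow> 'k) ring)"
  shows "relideal n q = UNIV"
  using assms unfolding relideal_def genideal_def by (auto dest: ideal.axioms(2))

lemma coset_UNIV: "a_r_coset (kQ n) UNIV (x :: path \<Rightarrow> 'k::field) = UNIV"
proof -
  have "z \<in> (\<Union>h\<in>UNIV. {h \<oplus>\<^bsub>kQ n\<^esub> x})" for z :: "path \<Rightarrow> 'k"
  proof -
    have "z = (\<lambda>r. z r - x r) \<oplus>\<^bsub>kQ n\<^esub> x" by (simp add: fun_eq_iff)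
    then show ?thesis by blast
  qed
  then show ?thesis unfolding a_r_coset_def' by blast
qed

lemma nonring:
  fixes q p :: "nat \<Rightarrow> 'k::field"
  assumes R: "\<not> ring (kQ n :: (path \<Rightarrow> 'k) ring)"
  shows "\<exists>f. alg_iso n q p f \<and> (\<forall>x y. f (cls n q x) = cls n p y)"
proof -
  have q: "relideal n q = UNIV" and p: "relideal n p = UNIV" using relideal_nonring[OF R] by auto
  have c: "cls n q x = UNIV" "cls n p x = UNIV" for x :: "path \<Rightarrow> 'k"
    unfolding cls_def q p coset_UNIV by auto
  have "Aq n q = Aq n p" unfolding Aq_def q p ..
  then have "id \<in> ring_iso (Aq n q) (Aq n p)" using ring_iso_set_refl by metis
  then show ?thesis unfolding alg_iso_def using c by (intro exI[of _ id]) auto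
qed

context pm begin

lemma F_relq:
  assumes i: "i < n"
  shows "F (relq n q i) = (\<lambda>r. pmul n (F (aa i)) (F (ast i)) r
     - q i * pmul n (F (ast ((i + n - 1) mod n))) (F (aa ((i + n - 1) mod n))) r)"
proof -
  have j: "(i + n - 1) mod n < n" using i by simp
  show ?thesis unfolding relq_def Fm_lin
    using F_mult[OF aa_KQ[OF i] ast_KQ[OF i]] F_mult[OF ast_KQ[OF j] aa_KQ[OF j]] by simp
qed

end

lemma smult_one [simp]: "smult 1 x = x" by (simp add: smult_def)

definition wt :: "(nat \<Rightarrow> 'k::field) \<Rightarrow> path \<Rightarrow> 'k" where
  "wt \<alpha> r = (case r of Triv _ \<Rightarrow> 1 | Pth xs \<Rightarrow> prod_list (map (\<lambda>x. case x of Arr i \<Rightarrow> \<alpha> i | Star _ \<Rightarrow> 1) xs))"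

lemma relab_id [simp]: "relab id id r = r" by (cases r) simp_all

lemma pm1:
  assumes a: "\<forall>i<n. \<alpha> i \<noteq> 0"
  shows "pm n id id id id (wt \<alpha>)"
proof -
  have gm: "goodmap n id id" by (simp add: goodmap_def)
  have ip: "invpair n id id id id" by (simp add: invpair_def)
  show ?thesis
  proof (rule pm.intro[OF gm gm ip ip])
  show "\<And>v. v < n \<Longrightarrow> wt \<alpha> (Triv v) = 1" by (simp add: wt_def)
  show "wt \<alpha> r \<noteq> 0" if "valid_path n r" for r
  proof (cases r)
    case (Pth xs)
    then have "\<forall>x\<in>set xs. aidx x < n" using that by auto
    then have "0 \<notin> set (map (\<lambda>x. case x of Arr i \<Rightarrow> \<alpha> i | Star _ \<Rightarrow> 1) xs)"
      using a by (auto split: arr.splits)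
    then show ?thesis using Pth by (simp add: wt_def prod_list_zero_iff)
  qed (simp add: wt_def)
  show "wt \<alpha> c = wt \<alpha> a * wt \<alpha> b" if "pconcat n a b = Some c" for a b c
    using that by (cases a; cases b) (auto simp: pconcat_def wt_def split: if_splits)
qed
qed

lemma part1:
  fixes n :: nat and q :: "nat \<Rightarrow> 'k::field"
  assumes n: "n > 0" and qnz: "\<forall>i<n. q i \<noteq> 0" and a: "\<forall>i<n. \<alpha> i \<noteq> 0"
  shows "let p = (\<lambda>i. \<alpha> ((i + n - 1) mod n) / \<alpha> i * q i) in
         \<exists>f. alg_iso n q p f \<and>
           (\<forall>i<n. f (cls n q (ee i)) = cls n p (ee i)
                \<and> f (cls n q (aa i)) = cls n p (smult (\<alpha> i) (aa i))
                \<and> f (cls n q (ast i)) = cls n p (ast i))"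
proof -
  define p where "p = (\<lambda>i. \<alpha> ((i + n - 1) mod n) / \<alpha> i * q i)"
  have "\<exists>f. alg_iso n q p f \<and>
           (\<forall>i<n. f (cls n q (ee i)) = cls n p (ee i)
                \<and> f (cls n q (aa i)) = cls n p (smult (\<alpha> i) (aa i))
                \<and> f (cls n q (ast i)) = cls n p (ast i))"
  proof (cases "ring (kQ n :: (path \<Rightarrow> 'k) ring)")
    case False
    then show ?thesis using nonring[OF False, of q p] by blast
  next
    case R: True
    interpret pm n id id id id "wt \<alpha>" using pm1[OF a] .
    interpret pG: pm n id id id id "\<lambda>s. inverse (wt \<alpha> (relab id id s))" by (rule pm_swap)
    have Faa: "F (aa i) = smult (\<alpha> i) (aa i)" if "i < n" for i
      unfolding aa_def using F_pth[of "Pth [Arr i]"] that by (simp add: wt_def)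
    have Fast: "F (ast i) = ast i" if "i < n" for i
      unfolding ast_def using F_pth[of "Pth [Star i]"] that by (simp add: wt_def)
    have Fee: "F (ee i) = ee i" if "i < n" for i
      unfolding ee_def using F_pth[of "Triv i"] that by (simp add: wt_def)
    have Gaa: "G (aa i) = smult (inverse (\<alpha> i)) (aa i)" if "i < n" for i
      unfolding aa_def using pG.F_pth[of "Pth [Arr i]"] that by (simp add: wt_def)
    have Gast: "G (ast i) = ast i" if "i < n" for i
      unfolding ast_def using pG.F_pth[of "Pth [Star i]"] that by (simp add: wt_def)
    have Fr: "F (relq n q i) \<in> relideal n p" if i: "i < n" for i
    proof -
      let ?j = "(i + n - 1) mod n"
      have j: "?j < n" using i by simp
      have "F (relq n q i) = smult (\<alpha> i) (relq n p i)"
        unfolding F_relq[OF i] Faa[OF i] Fast[OF i] Faa[OF j] Fast[OF j]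
        apply (simp only: pmul_smult_left pmul_smult_right)
        using a i j by (simp add: relq_def p_def smult_def fun_eq_iff field_simps)
      then show ?thesis using smult_relq_in[OF R i] by simp
    qed
    have Gr: "G (relq n p i) \<in> relideal n q" if i: "i < n" for i
    proof -
      let ?j = "(i + n - 1) mod n"
      have j: "?j < n" using i by simp
      have "G (relq n p i) = smult (inverse (\<alpha> i)) (relq n q i)"
        unfolding pG.F_relq[OF i] Gaa[OF i] Gast[OF i] Gaa[OF j] Gast[OF j]
        apply (simp only: pmul_smult_left pmul_smult_right)
        using a i j by (simp add: relq_def p_def smult_def fun_eq_iff field_simps)
      then show ?thesis using smult_relq_in[OF R i] by simp
    qed
    obtain f where f: "alg_iso n q p f" "\<forall>x\<in>KQ n. f (cls n q x) = cls n p (F x)"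
      using main_iso[OF R Fr Gr] by blast
    have fe: "f (cls n q x) = cls n p (F x)" if "x \<in> KQ n" for x using f(2) that by blast
    show ?thesis
    proof (intro exI[of _ f] conjI allI impI)
      show "alg_iso n q p f" by (rule f(1))
      fix i assume i: "i < n"
      show "f (cls n q (ee i)) = cls n p (ee i)" using fe[OF ee_KQ[OF i]] Fee[OF i] by simp
      show "f (cls n q (aa i)) = cls n p (smult (\<alpha> i) (aa i))" using fe[OF aa_KQ[OF i]] Faa[OF i] by simp
      show "f (cls n q (ast i)) = cls n p (ast i)" using fe[OF ast_KQ[OF i]] Fast[OF i] by simp
    qed
  qed
  then show ?thesis unfolding p_def Let_def .
qed


definition pr :: "nat \<Rightarrow> nat \<Rightarrow> nat" where "pr n i = (i + n - 1) mod n"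
definition sc :: "nat \<Rightarrow> nat \<Rightarrow> nat" where "sc n i = Suc i mod n"

lemma relq_alt: "relq n q i = (\<lambda>r. pmul n (aa i) (ast i) r - q i * pmul n (ast (pr n i)) (aa (pr n i)) r)"
  by (simp add: relq_def pr_def)

lemma pr_lt: "i < n \<Longrightarrow> pr n i < n" by (simp add: pr_def)
lemma sc_lt: "i < n \<Longrightarrow> sc n i < n" by (simp add: sc_def)

lemma pr_sc: "i < n \<Longrightarrow> pr n (sc n i) = i"
proof -
  assume i: "i < n"
  show ?thesis
  proof (cases "Suc i = n")
    case True then show ?thesis by (simp add: pr_def sc_def)
  next
    case False
    then have "Suc i < n" using i by simp
    then show ?thesis using i by (simp add: pr_def sc_def)
  qed
qed

lemma sc_pr: "i < n \<Longrightarrow> sc n (pr n i) = i"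
proof -
  assume i: "i < n"
  show ?thesis
  proof (cases "i = 0")
    case True
    then show ?thesis using i by (simp add: pr_def sc_def)
  next
    case False
    have e: "i + n - 1 = (i - 1) + n" using False by simp
    have "(i + n - 1) mod n = (i - 1) mod n" unfolding e by (rule mod_add_self2)
    then have "(i + n - 1) mod n = i - 1" using i by simp
    then show ?thesis using i False by (simp add: pr_def sc_def)
  qed
qed

context pm begin
lemma F_relq': "i < n \<Longrightarrow> F (relq n q i) = (\<lambda>r. pmul n (F (aa i)) (F (ast i)) r
     - q i * pmul n (F (ast (pr n i))) (F (aa (pr n i))) r)"
  using F_relq by (simp add: pr_def)
end

fun shA :: "(nat \<Rightarrow> nat) \<Rightarrow> arr \<Rightarrow> arr" where
  "shA f (Arr i) = Arr (f i)" | "shA f (Star i) = Star (f i)"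

lemma pm2: "pm n (sc n) (shA (sc n)) (pr n) (shA (pr n)) (\<lambda>_. 1::'k::field)"
proof -
  have g1: "goodmap n (sc n) (shA (sc n))"
    unfolding goodmap_def
  proof (intro conjI allI impI)
    fix x assume "aidx x < n"
    then show "aidx (shA (sc n) x) < n" by (cases x) (simp_all add: sc_def)
    show "asrc n (shA (sc n) x) = sc n (asrc n x)" by (cases x) (simp_all add: sc_def)
    show "atgt n (shA (sc n) x) = sc n (atgt n x)" by (cases x) (simp_all add: sc_def)
  qed (simp add: sc_lt)
  have g2: "goodmap n (pr n) (shA (pr n))"
    unfolding goodmap_def
  proof (intro conjI allI impI)
    fix x assume x: "aidx x < n"
    then show "aidx (shA (pr n) x) < n" by (cases x) (simp_all add: pr_lt)
    show "asrc n (shA (pr n) x) = pr n (asrc n x)"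
      using x by (cases x) (simp_all flip: sc_def add: pr_sc sc_pr)
    show "atgt n (shA (pr n) x) = pr n (atgt n x)"
      using x by (cases x) (simp_all flip: sc_def add: pr_sc sc_pr)
  qed (simp add: pr_lt)
  have i1: "invpair n (sc n) (shA (sc n)) (pr n) (shA (pr n))"
    unfolding invpair_def
  proof (intro conjI allI impI)
    fix x assume "aidx x < n"
    then show "shA (pr n) (shA (sc n) x) = x" by (cases x) (simp_all add: pr_sc)
  qed (simp add: pr_sc)
  have i2: "invpair n (pr n) (shA (pr n)) (sc n) (shA (sc n))"
    unfolding invpair_def
  proof (intro conjI allI impI)
    fix x assume "aidx x < n"
    then show "shA (sc n) (shA (pr n) x) = x" by (cases x) (simp_all add: sc_pr)
  qed (simp add: sc_pr)
  show ?thesis by (rule pm.intro[OF g1 g2 i1 i2]) auto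
qed

lemma part2:
  fixes n :: nat and q :: "nat \<Rightarrow> 'k::field"
  assumes n: "n > 0"
  shows "let p = (\<lambda>i. q ((i + n - 1) mod n)) in
         \<exists>f. alg_iso n q p f \<and>
           (\<forall>i<n. f (cls n q (ee i)) = cls n p (ee ((i + 1) mod n))
                \<and> f (cls n q (aa i)) = cls n p (aa ((i + 1) mod n))
                \<and> f (cls n q (ast i)) = cls n p (ast ((i + 1) mod n)))"
proof -
  define p where "p = (\<lambda>i. q (pr n i))"
  have "\<exists>f. alg_iso n q p f \<and>
           (\<forall>i<n. f (cls n q (ee i)) = cls n p (ee (sc n i))
                \<and> f (cls n q (aa i)) = cls n p (aa (sc n i))
                \<and> f (cls n q (ast i)) = cls n p (ast (sc n i)))"
  proof (cases "ring (kQ n :: (path \<Rightarrow> 'k) ring)")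
    case False
    then show ?thesis using nonring[OF False, of q p] by blast
  next
    case R: True
    interpret pm n "sc n" "shA (sc n)" "pr n" "shA (pr n)" "\<lambda>_. 1::'k" by (rule pm2)
    interpret pG: pm n "pr n" "shA (pr n)" "sc n" "shA (sc n)" "\<lambda>s. inverse ((\<lambda>_. 1::'k) (relab (sc n) (shA (sc n)) s))"
      by (rule pm_swap)
    have Faa: "F (aa i) = aa (sc n i)" if "i < n" for i
      unfolding aa_def using F_pth[of "Pth [Arr i]"] that by simp
    have Fast: "F (ast i) = ast (sc n i)" if "i < n" for i
      unfolding ast_def using F_pth[of "Pth [Star i]"] that by simp
    have Fee: "F (ee i) = ee (sc n i)" if "i < n" for i
      unfolding ee_def using F_pth[of "Triv i"] that by simp
    have Gaa: "G (aa i) = aa (pr n i)" if "i < n" for i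
      unfolding aa_def using pG.F_pth[of "Pth [Arr i]"] that by simp
    have Gast: "G (ast i) = ast (pr n i)" if "i < n" for i
      unfolding ast_def using pG.F_pth[of "Pth [Star i]"] that by simp
    have Fr: "F (relq n q i) \<in> relideal n p" if i: "i < n" for i
    proof -
      have j: "pr n i < n" "sc n i < n" using i by (simp_all add: pr_lt sc_lt)
      have "F (relq n q i) = relq n p (sc n i)"
        by (subst F_relq'[OF i]) (simp add: Faa[OF i] Fast[OF i] Faa[OF j(1)] Fast[OF j(1)] relq_alt p_def pr_sc sc_pr i)
      then show ?thesis using relq_in[OF R j(2)] by simp
    qed
    have Gr: "G (relq n p i) \<in> relideal n q" if i: "i < n" for i
    proof -
      have j: "pr n i < n" using i by (simp_all add: pr_lt)
      have "G (relq n p i) = relq n q (pr n i)"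
        by (subst pG.F_relq'[OF i], simp only: Gaa[OF i] Gast[OF i] Gaa[OF j(1)] Gast[OF j(1)]) (simp add: relq_alt p_def)
      then show ?thesis using relq_in[OF R j(1)] by simp
    qed
    obtain f where f: "alg_iso n q p f" "\<forall>x\<in>KQ n. f (cls n q x) = cls n p (F x)"
      using main_iso[OF R Fr Gr] by blast
    have fe: "f (cls n q x) = cls n p (F x)" if "x \<in> KQ n" for x using f(2) that by blast
    show ?thesis
    proof (intro exI[of _ f] conjI allI impI)
      show "alg_iso n q p f" by (rule f(1))
      fix i assume i: "i < n"
      show "f (cls n q (ee i)) = cls n p (ee (sc n i))" using fe[OF ee_KQ[OF i]] Fee[OF i] by simp
      show "f (cls n q (aa i)) = cls n p (aa (sc n i))" using fe[OF aa_KQ[OF i]] Faa[OF i] by simp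
      show "f (cls n q (ast i)) = cls n p (ast (sc n i))" using fe[OF ast_KQ[OF i]] Fast[OF i] by simp
    qed
  qed
  moreover have "p = (\<lambda>i. q ((i + n - 1) mod n))" unfolding p_def pr_def ..
  moreover have "sc n i = (i + 1) mod n" for i unfolding sc_def by simp
  ultimately show ?thesis unfolding Let_def by simp
qed


definition ng :: "nat \<Rightarrow> nat \<Rightarrow> nat" where "ng n v = (n - v) mod n"
definition rvi :: "nat \<Rightarrow> nat \<Rightarrow> nat" where "rvi n i = n - i - 1"

fun rv :: "nat \<Rightarrow> arr \<Rightarrow> arr" where
  "rv n (Arr i) = Star (rvi n i)" | "rv n (Star i) = Arr (rvi n i)"

lemma ng_lt: "i < n \<Longrightarrow> ng n i < n" by (simp add: ng_def)
lemma rvi_lt: "i < n \<Longrightarrow> rvi n i < n" by (simp add: rvi_def)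

lemma ix_a: "i < n \<Longrightarrow> Suc (rvi n i) mod n = ng n i"
  by (simp add: rvi_def ng_def Suc_diff_Suc)

lemma ix_b: "i < n \<Longrightarrow> ng n (Suc i mod n) = rvi n i"
proof -
  assume i: "i < n"
  show ?thesis
  proof (cases "Suc i = n")
    case True then show ?thesis by (simp add: ng_def rvi_def)
  next
    case False
    then have "Suc i < n" using i by simp
    then show ?thesis by (simp add: ng_def rvi_def)
  qed
qed

lemma ix_c: "v < n \<Longrightarrow> ng n (ng n v) = v"
proof -
  assume v: "v < n"
  show ?thesis
  proof (cases "v = 0")
    case True then show ?thesis by (simp add: ng_def)
  next
    case False
    then have "(n - v) mod n = n - v" using v by simp
    then show ?thesis using v False by (simp add: ng_def)
  qed
qed

lemma ix_d: "i < n \<Longrightarrow> rvi n (rvi n i) = i" by (simp add: rvi_def)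

lemma ix_A: "i < n \<Longrightarrow> rvi n (pr n i) = ng n i"
proof -
  assume i: "i < n"
  show ?thesis
  proof (cases "i = 0")
    case True then show ?thesis using i by (simp add: pr_def rvi_def ng_def)
  next
    case False
    have e: "i + n - 1 = (i - 1) + n" using False by simp
    have "pr n i = (i - 1) mod n" unfolding pr_def e by (rule mod_add_self2)
    then have "pr n i = i - 1" using i by simp
    then show ?thesis using i False by (simp add: rvi_def ng_def)
  qed
qed

lemma ix_B: "i < n \<Longrightarrow> pr n (ng n i) = rvi n i"
proof -
  assume i: "i < n"
  show ?thesis
  proof (cases "i = 0")
    case True then show ?thesis using i by (simp add: pr_def rvi_def ng_def)
  next
    case False
    have ng: "ng n i = n - i" using i False by (simp add: ng_def)
    have e: "n - i + n - 1 = (n - i - 1) + n" using i by simp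
    have "pr n (ng n i) = ((n - i - 1) + n) mod n" unfolding pr_def ng e ..
    also have "\<dots> = (n - i - 1) mod n" by (rule mod_add_self2)
    also have "\<dots> = n - i - 1" using i by simp
    finally show ?thesis by (simp add: rvi_def)
  qed
qed



lemma pm3: "pm n (ng n) (rv n) (ng n) (rv n) (\<lambda>_. 1::'k::field)"
proof -
  have g1: "goodmap n (ng n) (rv n)"
    unfolding goodmap_def
  proof (intro conjI allI impI)
    fix x assume x: "aidx x < n"
    then show "aidx (rv n x) < n" by (cases x) (simp_all add: rvi_lt)
    show "asrc n (rv n x) = ng n (asrc n x)" using x by (cases x) (simp_all add: ix_a ix_b)
    show "atgt n (rv n x) = ng n (atgt n x)" using x by (cases x) (simp_all add: ix_a ix_b)
  qed (simp add: ng_lt)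
  have i1: "invpair n (ng n) (rv n) (ng n) (rv n)"
    unfolding invpair_def
  proof (intro conjI allI impI)
    fix x assume "aidx x < n"
    then show "rv n (rv n x) = x" by (cases x) (simp_all add: ix_d)
  qed (simp add: ix_c)
  show ?thesis by (rule pm.intro[OF g1 g1 i1 i1]) auto
qed

lemma part3:
  fixes n :: nat and q :: "nat \<Rightarrow> 'k::field"
  assumes n: "n > 0" and qnz: "\<forall>i<n. q i \<noteq> 0"
  shows "let p = (\<lambda>i. inverse (q ((n - i) mod n))) in
         \<exists>f. alg_iso n q p f \<and>
           (\<forall>i<n. f (cls n q (ee i)) = cls n p (ee ((n - i) mod n))
                \<and> f (cls n q (aa i)) = cls n p (ast (n - i - 1))
                \<and> f (cls n q (ast i)) = cls n p (aa (n - i - 1)))"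
proof -
  define p where "p = (\<lambda>i. inverse (q (ng n i)))"
  have "\<exists>f. alg_iso n q p f \<and>
           (\<forall>i<n. f (cls n q (ee i)) = cls n p (ee (ng n i))
                \<and> f (cls n q (aa i)) = cls n p (ast (rvi n i))
                \<and> f (cls n q (ast i)) = cls n p (aa (rvi n i)))"
  proof (cases "ring (kQ n :: (path \<Rightarrow> 'k) ring)")
    case False
    then show ?thesis using nonring[OF False, of q p] by blast
  next
    case R: True
    interpret pm n "ng n" "rv n" "ng n" "rv n" "\<lambda>_. 1::'k" by (rule pm3)
    interpret pG: pm n "ng n" "rv n" "ng n" "rv n" "\<lambda>s. inverse ((\<lambda>_. 1::'k) (relab (ng n) (rv n) s))"
      by (rule pm_swap)
    have Faa: "F (aa i) = ast (rvi n i)" if "i < n" for i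
      unfolding aa_def ast_def using F_pth[of "Pth [Arr i]"] that by simp
    have Fast: "F (ast i) = aa (rvi n i)" if "i < n" for i
      unfolding aa_def ast_def using F_pth[of "Pth [Star i]"] that by simp
    have Fee: "F (ee i) = ee (ng n i)" if "i < n" for i
      unfolding ee_def using F_pth[of "Triv i"] that by simp
    have Gaa: "G (aa i) = ast (rvi n i)" if "i < n" for i
      unfolding aa_def ast_def using pG.F_pth[of "Pth [Arr i]"] that by simp
    have Gast: "G (ast i) = aa (rvi n i)" if "i < n" for i
      unfolding aa_def ast_def using pG.F_pth[of "Pth [Star i]"] that by simp
    have Fr: "F (relq n q i) \<in> relideal n p" if i: "i < n" for i
    proof -
      have j: "pr n i < n" "ng n i < n" using i by (simp_all add: pr_lt ng_lt)
      have qi: "q i \<noteq> 0" using qnz i by blast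
      have "F (relq n q i) = (\<lambda>r. pmul n (ast (rvi n i)) (aa (rvi n i)) r - q i * pmul n (aa (ng n i)) (ast (ng n i)) r)"
        by (subst F_relq'[OF i], simp only: Faa[OF i] Fast[OF i] Faa[OF j(1)] Fast[OF j(1)] ix_A[OF i])
      also have "\<dots> = smult (- q i) (relq n p (ng n i))"
        unfolding relq_alt smult_def p_def ix_B[OF i] ix_c[OF i] using qi
        by (simp add: fun_eq_iff field_simps)
      finally have "F (relq n q i) = smult (- q i) (relq n p (ng n i))" .
      then show ?thesis using smult_relq_in[OF R j(2)] by simp
    qed
    have Gr: "G (relq n p i) \<in> relideal n q" if i: "i < n" for i
    proof -
      have j: "pr n i < n" "ng n i < n" using i by (simp_all add: pr_lt ng_lt)
      have qi: "q (ng n i) \<noteq> 0" using qnz j by blast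
      have "G (relq n p i) = (\<lambda>r. pmul n (ast (rvi n i)) (aa (rvi n i)) r - p i * pmul n (aa (ng n i)) (ast (ng n i)) r)"
        by (subst pG.F_relq'[OF i], simp only: Gaa[OF i] Gast[OF i] Gaa[OF j(1)] Gast[OF j(1)] ix_A[OF i])
      also have "\<dots> = smult (- p i) (relq n q (ng n i))"
        unfolding relq_alt smult_def p_def ix_B[OF i] using qi
        by (simp add: fun_eq_iff field_simps)
      finally have "G (relq n p i) = smult (- p i) (relq n q (ng n i))" .
      then show ?thesis using smult_relq_in[OF R j(2)] by simp
    qed
    obtain f where f: "alg_iso n q p f" "\<forall>x\<in>KQ n. f (cls n q x) = cls n p (F x)"
      using main_iso[OF R Fr Gr] by blast
    have fe: "f (cls n q x) = cls n p (F x)" if "x \<in> KQ n" for x using f(2) that by blast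
    show ?thesis
    proof (intro exI[of _ f] conjI allI impI)
      show "alg_iso n q p f" by (rule f(1))
      fix i assume i: "i < n"
      show "f (cls n q (ee i)) = cls n p (ee (ng n i))" using fe[OF ee_KQ[OF i]] Fee[OF i] by simp
      show "f (cls n q (aa i)) = cls n p (ast (rvi n i))" using fe[OF aa_KQ[OF i]] Faa[OF i] by simp
      show "f (cls n q (ast i)) = cls n p (aa (rvi n i))" using fe[OF ast_KQ[OF i]] Fast[OF i] by simp
    qed
  qed
  then show ?thesis unfolding Let_def p_def ng_def rvi_def .
qed


theorem lemma2p7:
  fixes n :: nat and q :: "nat \<Rightarrow> 'k::field_char_0"
  assumes "alg_closed TYPE('k)"
    and "n \<ge> 3"
    and "\<forall>i<n. q i \<noteq> 0"
  shows
    "(\<forall>\<alpha> :: nat \<Rightarrow> 'k. (\<forall>i<n. \<alpha> i \<noteq> 0) \<longrightarrow>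
        (let p = (\<lambda>i. \<alpha> ((i + n - 1) mod n) / \<alpha> i * q i) in
         \<exists>f. alg_iso n q p f \<and>
           (\<forall>i<n. f (cls n q (ee i)) = cls n p (ee i)
                \<and> f (cls n q (aa i)) = cls n p (smult (\<alpha> i) (aa i))
                \<and> f (cls n q (ast i)) = cls n p (ast i))))
     \<and> (let p = (\<lambda>i. q ((i + n - 1) mod n)) in
         \<exists>f. alg_iso n q p f \<and>
           (\<forall>i<n. f (cls n q (ee i)) = cls n p (ee ((i + 1) mod n))
                \<and> f (cls n q (aa i)) = cls n p (aa ((i + 1) mod n))
                \<and> f (cls n q (ast i)) = cls n p (ast ((i + 1) mod n))))
     \<and> (let p = (\<lambda>i. inverse (q ((n - i) mod n))) in
         \<exists>f. alg_iso n q p f \<and>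
           (\<forall>i<n. f (cls n q (ee i)) = cls n p (ee ((n - i) mod n))
                \<and> f (cls n q (aa i)) = cls n p (ast (n - i - 1))
                \<and> f (cls n q (ast i)) = cls n p (aa (n - i - 1))))"
proof -
  have n: "n > 0" using assms(2) by simp
  have qnz: "\<forall>i<n. q i \<noteq> 0" using assms(3) .
  show ?thesis
  proof (intro conjI allI impI)
    fix \<alpha> :: "nat \<Rightarrow> 'k" assume a: "\<forall>i<n. \<alpha> i \<noteq> 0"
    show "let p = (\<lambda>i. \<alpha> ((i + n - 1) mod n) / \<alpha> i * q i) in
         \<exists>f. alg_iso n q p f \<and>
           (\<forall>i<n. f (cls n q (ee i)) = cls n p (ee i)
                \<and> f (cls n q (aa i)) = cls n p (smult (\<alpha> i) (aa i))
                \<and> f (cls n q (ast i)) = cls n p (ast i))"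
      by (rule part1[OF n qnz a])
  next
    show "let p = (\<lambda>i. q ((i + n - 1) mod n)) in
         \<exists>f. alg_iso n q p f \<and>
           (\<forall>i<n. f (cls n q (ee i)) = cls n p (ee ((i + 1) mod n))
                \<and> f (cls n q (aa i)) = cls n p (aa ((i + 1) mod n))
                \<and> f (cls n q (ast i)) = cls n p (ast ((i + 1) mod n)))"
      by (rule part2[OF n])
  next
    show "let p = (\<lambda>i. inverse (q ((n - i) mod n))) in
         \<exists>f. alg_iso n q p f \<and>
           (\<forall>i<n. f (cls n q (ee i)) = cls n p (ee ((n - i) mod n))
                \<and> f (cls n q (aa i)) = cls n p (ast (n - i - 1))
                \<and> f (cls n q (ast i)) = cls n p (aa (n - i - 1)))"
      by (rule part3[OF n qnz])
  qed
qed

end
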